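(* For integers $n,m\ge 0$, the number of lattice paths from $(0,0)$ to $(2n+m,m)$ with steps $(1,1),(1,-1),(2,0)$ that never go below the $x$-axis equals $$\sum_{p=0}^{n}\left(\binom{2n-2p+m}{n-p}-\binom{2n-2p+m}{n-p-1}\right)\binom{2n+m-p}{p}.$$
   Context: Binomial coefficients $\binom{a}{b}$ with $b<0$ are $0$. *)

theory Defs
  imports Main
begin

definition path_steps :: "(int \<times> int) set" where
  "path_steps = {(1, 1), (1, -1), (2, 0)}"

text \<open>A lattice path from (0,0) is a list of steps; the k-th visited point is the sum of
  the first k steps. It ends at (a,b) and never goes below the x-axis.\<close>
definition nonneg_paths :: "int \<Rightarrow> int \<Rightarrow> (int \<times> int) list set" where
  "nonneg_paths a b = {xs. set xs \<subseteq> path_steps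
      \<and> sum_list (map fst xs) = a \<and> sum_list (map snd xs) = b
      \<and> (\<forall>k\<le>length xs. 0 \<le> sum_list (map snd (take k xs)))}"

definition ibinom :: "int \<Rightarrow> int \<Rightarrow> int" where
  "ibinom a b = (if b < 0 then 0 else int (nat a choose nat b))"

end

theory Submission
  imports Defs
begin

definition ok :: "int \<Rightarrow> (int \<times> int) list \<Rightarrow> bool" where
  "ok h xs = (\<forall>k\<le>length xs. 0 \<le> h + sum_list (map snd (take k xs)))"

lemma ok_Nil[simp]: "ok h [] = (0 \<le> h)" by (simp add: ok_def)

lemma ok_Cons[simp]: "ok h (x#xs) = (0 \<le> h \<and> ok (h + snd x) xs)"
proof
  assume A: "ok h (x#xs)"
  have "0 \<le> h" using A[unfolded ok_def, rule_format, of 0] by simp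
  moreover have "ok (h + snd x) xs" unfolding ok_def
  proof (intro allI impI)
    fix k assume "k \<le> length xs"
    then show "0 \<le> h + snd x + sum_list (map snd (take k xs))"
      using A[unfolded ok_def, rule_format, of "Suc k"] by (simp add: add.assoc)
  qed
  ultimately show "0 \<le> h \<and> ok (h + snd x) xs" by blast
next
  assume B: "0 \<le> h \<and> ok (h + snd x) xs"
  show "ok h (x#xs)" unfolding ok_def
  proof (intro allI impI)
    fix k assume k: "k \<le> length (x#xs)"
    show "0 \<le> h + sum_list (map snd (take k (x#xs)))"
    proof (cases k)
      case 0 then show ?thesis using B by simp
    next
      case (Suc j) then show ?thesis using B k unfolding ok_def by (simp add: add.assoc)
    qed
  qed
qed

definition S :: "int \<Rightarrow> nat \<Rightarrow> nat \<Rightarrow> nat \<Rightarrow> (int \<times> int) list set" where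
  "S h a b p = {xs. set xs \<subseteq> path_steps \<and> count_list xs (1,1) = a \<and> count_list xs (1,-1) = b
     \<and> count_list xs (2,0) = p \<and> ok h xs}"

lemma len_counts: "set xs \<subseteq> path_steps \<Longrightarrow>
  length xs = count_list xs (1,1) + count_list xs (1,-1) + count_list xs (2,0)"
  by (induction xs) (auto simp: path_steps_def)

lemma sums_counts: "set xs \<subseteq> path_steps \<Longrightarrow>
  sum_list (map fst xs) = int (count_list xs (1,1)) + int (count_list xs (1,-1)) + 2 * int (count_list xs (2,0))
  \<and> sum_list (map snd xs) = int (count_list xs (1,1)) - int (count_list xs (1,-1))"
  by (induction xs) (auto simp: path_steps_def)

lemma finite_S: "finite (S h a b p)"
proof -
  have "S h a b p \<subseteq> {xs. set xs \<subseteq> path_steps \<and> length xs = a + b + p}"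
    unfolding S_def using len_counts by auto
  moreover have "finite {xs. set xs \<subseteq> path_steps \<and> length xs = a + b + p}"
    by (rule finite_lists_length_eq) (simp add: path_steps_def)
  ultimately show ?thesis by (rule finite_subset)
qed

lemma S_neg: "h < 0 \<Longrightarrow> S h a b p = {}"
  unfolding S_def by (auto simp: ok_def)

lemma S_decomp:
  assumes "a + b + p = Suc N" and h0: "0 \<le> h"
  shows "S h a b p = (Cons (1,1) ` (if a > 0 then S (h+1) (a-1) b p else {}))
     \<union> (Cons (1,-1) ` (if b > 0 then S (h-1) a (b-1) p else {}))
     \<union> (Cons (2,0) ` (if p > 0 then S h a b (p-1) else {}))"
proof (intro equalityI subsetI)
  fix xs assume xs: "xs \<in> S h a b p"
  then have "length xs = Suc N" using len_counts[of xs] assms unfolding S_def by auto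
  then obtain y ys where e: "xs = y # ys" by (cases xs) auto
  have "y \<in> path_steps" using xs e unfolding S_def by auto
  then have "y = (1,1) \<or> y = (1,-1) \<or> y = (2,0)" by (auto simp: path_steps_def)
  have ys: "set ys \<subseteq> path_steps" "ok (h + snd y) ys" "0 \<le> h"
    and c: "count_list xs (1,1) = a" "count_list xs (1,-1) = b" "count_list xs (2,0) = p"
    using xs e unfolding S_def by auto
  consider "y = (1,1)" | "y = (1,-1)" | "y = (2,0)" using \<open>y = (1,1) \<or> y = (1,-1) \<or> y = (2,0)\<close> by blast
  then show "xs \<in> (Cons (1,1) ` (if a > 0 then S (h+1) (a-1) b p else {}))
     \<union> (Cons (1,-1) ` (if b > 0 then S (h-1) a (b-1) p else {}))
     \<union> (Cons (2,0) ` (if p > 0 then S h a b (p-1) else {}))"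
  proof cases
    case 1
    then have "ys \<in> S (h+1) (a-1) b p" "a > 0" using ys c e unfolding S_def by auto
    then show ?thesis using e 1 by auto
  next
    case 2
    then have "ys \<in> S (h-1) a (b-1) p" "b > 0" using ys c e unfolding S_def by auto
    then show ?thesis using e 2 by auto
  next
    case 3
    then have "ys \<in> S h a b (p-1)" "p > 0" using ys c e unfolding S_def by auto
    then show ?thesis using e 3 by auto
  qed
next
  fix xs assume "xs \<in> (Cons (1,1) ` (if a > 0 then S (h+1) (a-1) b p else {}))
     \<union> (Cons (1,-1) ` (if b > 0 then S (h-1) a (b-1) p else {}))
     \<union> (Cons (2,0) ` (if p > 0 then S h a b (p-1) else {}))"
  then show "xs \<in> S h a b p" unfolding S_def using h0
    by (auto simp: path_steps_def split: if_splits)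
qed

lemma ibinom_neg: "k < 0 \<Longrightarrow> ibinom N k = 0" by (simp add: ibinom_def)
lemma ibinom_big: "0 \<le> N \<Longrightarrow> N < k \<Longrightarrow> ibinom N k = 0"
  by (simp add: ibinom_def binomial_eq_0 nat_less_eq_zless)
lemma ibinom_0: "ibinom N 0 = 1" by (simp add: ibinom_def)
lemma ibinom_diag: "0 \<le> N \<Longrightarrow> ibinom N N = 1" by (simp add: ibinom_def)

lemma pascal: assumes "1 \<le> N" shows "ibinom N k = ibinom (N-1) k + ibinom (N-1) (k-1)"
proof -
  consider "k < 0" | "k = 0" | "k > 0" by linarith
  then show ?thesis
  proof cases
    case 1 then show ?thesis by (simp add: ibinom_def)
  next
    case 2 then show ?thesis by (simp add: ibinom_def)
  next
    case 3
    have e1: "nat N = Suc (nat (N-1))" using assms by simp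
    have e2: "nat k = Suc (nat (k-1))" using 3 by simp
    show ?thesis using 3 unfolding ibinom_def
      by (simp only: e1 e2 binomial_Suc_Suc) (simp add: add.commute)
  qed
qed

definition B :: "int \<Rightarrow> nat \<Rightarrow> nat \<Rightarrow> int" where
  "B h a b = ibinom (int a + int b) (int b) - ibinom (int a + int b) (int b - h - 1)"

definition T :: "int \<Rightarrow> nat \<Rightarrow> nat \<Rightarrow> nat \<Rightarrow> int" where
  "T h a b p = ibinom (int a + int b + int p) (int p) * B h a b"

lemma B_rec:
  assumes h: "0 \<le> h" and hb: "int b \<le> h + int a" and ab: "1 \<le> a + b"
  shows "B h a b = (if a > 0 then B (h+1) (a-1) b else 0) + (if b > 0 \<and> h > 0 then B (h-1) a (b-1) else 0)"
proof -
  define M where "M = int a + int b"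
  have M1: "1 \<le> M" using ab unfolding M_def by linarith
  have BB: "B h a b = (ibinom (M-1) (int b) - ibinom (M-1) (int b - h - 2))
                    + (ibinom (M-1) (int b - 1) - ibinom (M-1) (int b - h - 1))"
    unfolding B_def M_def[symmetric] using pascal[OF M1, of "int b"] pascal[OF M1, of "int b - h - 1"]
    by (simp add: algebra_simps)
  have up: "(if a > 0 then B (h+1) (a-1) b else 0) = ibinom (M-1) (int b) - ibinom (M-1) (int b - h - 2)"
  proof (cases "a > 0")
    case True then show ?thesis unfolding B_def M_def by (simp add: of_nat_diff algebra_simps)
  next
    case False
    then have "a = 0" by simp
    then have "b \<ge> 1" using ab by simp
    have "ibinom (M-1) (int b) = 0" using \<open>a = 0\<close> \<open>b \<ge> 1\<close> unfolding M_def
      by (intro ibinom_big) auto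
    moreover have "ibinom (M-1) (int b - h - 2) = 0" using \<open>a = 0\<close> hb by (intro ibinom_neg) simp
    ultimately show ?thesis using False by simp
  qed
  have down: "(if b > 0 \<and> h > 0 then B (h-1) a (b-1) else 0) = ibinom (M-1) (int b - 1) - ibinom (M-1) (int b - h - 1)"
  proof (cases "b > 0 \<and> h > 0")
    case True then show ?thesis unfolding B_def M_def by (simp add: of_nat_diff algebra_simps)
  next
    case False
    then consider "b = 0" | "h = 0" using h by linarith
    then show ?thesis
    proof cases
      case 1 then show ?thesis using h by (simp add: ibinom_neg)
    next
      case 2 then show ?thesis by simp
    qed
  qed
  show ?thesis using BB up down by simp
qed

lemma T_rec:
  assumes h: "0 \<le> h" and hb: "int b \<le> h + int a" and abp: "1 \<le> a + b + p"
  shows "T h a b p = (if a > 0 then T (h+1) (a-1) b p else 0) + (if b > 0 \<and> h > 0 then T (h-1) a (b-1) p else 0)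
     + (if p > 0 then T h a b (p-1) else 0)"
proof (cases "a + b = 0")
  case True
  then have "a = 0" "b = 0" "p > 0" using abp by auto
  then show ?thesis unfolding T_def B_def using h by (simp add: ibinom_neg ibinom_diag)
next
  case False
  then have ab: "1 \<le> a + b" by linarith
  note Br = B_rec[OF h hb ab]
  show ?thesis
  proof (cases "p > 0")
    case False
    then show ?thesis unfolding T_def using Br by (simp add: ibinom_0)
  next
    case True
    define K where "K = int a + int b + int p"
    have K1: "1 \<le> K" using ab unfolding K_def by linarith
    have P: "ibinom K (int p) = ibinom (K-1) (int p) + ibinom (K-1) (int p - 1)" by (rule pascal[OF K1])
    have "T h a b p = ibinom (K-1) (int p) * B h a b + ibinom (K-1) (int p - 1) * B h a b"
      unfolding T_def K_def[symmetric] P by (simp add: algebra_simps)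
    also have "ibinom (K-1) (int p) * B h a b = (if a > 0 then T (h+1) (a-1) b p else 0) + (if b > 0 \<and> h > 0 then T (h-1) a (b-1) p else 0)"
      unfolding Br T_def K_def by (simp add: of_nat_diff algebra_simps)
    also have "ibinom (K-1) (int p - 1) * B h a b = T h a b (p-1)"
      unfolding T_def K_def using True by (simp add: of_nat_diff algebra_simps)
    finally show ?thesis using True by simp
  qed
qed

lemma card_if_int: "int (card (if c then X else {})) = (if c then int (card X) else 0)" by simp

lemma card_S: "a + b + p = N \<Longrightarrow> 0 \<le> h \<Longrightarrow> int b \<le> h + int a \<Longrightarrow> int (card (S h a b p)) = T h a b p"
proof (induction N arbitrary: h a b p)
  case 0
  then have z: "a = 0" "b = 0" "p = 0" by auto
  have "S h 0 0 0 = {[]}"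
  proof (intro equalityI subsetI)
    fix xs assume "xs \<in> S h 0 0 0"
    then have "length xs = 0" using len_counts[of xs] unfolding S_def by auto
    then show "xs \<in> {[]}" by simp
  qed (use 0 in \<open>auto simp: S_def\<close>)
  then show ?case using z 0 unfolding T_def B_def by (simp add: ibinom_neg ibinom_0)
next
  case (Suc N)
  define U where "U = (if a > 0 then S (h+1) (a-1) b p else {})"
  define D where "D = (if b > 0 then S (h-1) a (b-1) p else {})"
  define F where "F = (if p > 0 then S h a b (p-1) else {})"
  have dec: "S h a b p = Cons (1,1) ` U \<union> Cons (1,-1) ` D \<union> Cons (2,0) ` F"
    unfolding U_def D_def F_def by (rule S_decomp[OF Suc.prems(1) Suc.prems(2)])
  have fin: "finite U" "finite D" "finite F" unfolding U_def D_def F_def by (auto simp: finite_S)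
  have inj: "inj_on (Cons x) X" for x :: "int \<times> int" and X by (simp add: inj_on_def)
  have "card (S h a b p) = card U + card D + card F"
    unfolding dec
    by (subst card_Un_disjoint, use fin in auto)
       (subst card_Un_disjoint, use fin in \<open>auto simp: card_image[OF inj]\<close>)
  then have c: "int (card (S h a b p)) = int (card U) + int (card D) + int (card F)" by simp
  have cU: "int (card U) = (if a > 0 then T (h+1) (a-1) b p else 0)"
    unfolding U_def using Suc.IH[of "a-1" b p "h+1"] Suc.prems by auto
  have cD: "int (card D) = (if b > 0 \<and> h > 0 then T (h-1) a (b-1) p else 0)"
  proof (cases "b > 0 \<and> h > 0")
    case True then show ?thesis unfolding D_def using Suc.IH[of a "b-1" p "h-1"] Suc.prems by auto
  next
    case False
    then have "b = 0 \<or> h = 0" using Suc.prems by auto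
    then show ?thesis unfolding D_def using False by (auto simp: S_neg)
  qed
  have cF: "int (card F) = (if p > 0 then T h a b (p-1) else 0)"
    unfolding F_def using Suc.IH[of a b "p-1" h] Suc.prems by auto
  show ?case unfolding c cU cD cF using T_rec[of h b a p] Suc.prems by simp
qed

lemma nonneg_eq: "nonneg_paths (2 * int n + int m) (int m) = (\<Union>p\<in>{0..n}. S 0 (n-p+m) (n-p) p)"
proof (intro equalityI subsetI)
  fix xs assume xs: "xs \<in> nonneg_paths (2 * int n + int m) (int m)"
  define p where "p = count_list xs (2,0)"
  have st: "set xs \<subseteq> path_steps" using xs unfolding nonneg_paths_def by auto
  note sc = sums_counts[OF st]
  have e1: "int (count_list xs (1,1)) + int (count_list xs (1,-1)) + 2 * int p = 2 * int n + int m"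
    and e2: "int (count_list xs (1,1)) - int (count_list xs (1,-1)) = int m"
    using sc xs unfolding nonneg_paths_def p_def by auto
  have pn: "p \<le> n" and cb: "count_list xs (1,-1) = n - p" and ca: "count_list xs (1,1) = n - p + m"
    using e1 e2 by linarith+
  have "ok 0 xs" using xs unfolding nonneg_paths_def ok_def by auto
  then have "xs \<in> S 0 (n-p+m) (n-p) p" unfolding S_def using st ca cb p_def by auto
  then show "xs \<in> (\<Union>p\<in>{0..n}. S 0 (n-p+m) (n-p) p)" using pn by auto
next
  fix xs assume "xs \<in> (\<Union>p\<in>{0..n}. S 0 (n-p+m) (n-p) p)"
  then obtain p where pn: "p \<le> n" and xs: "xs \<in> S 0 (n-p+m) (n-p) p" by auto
  have st: "set xs \<subseteq> path_steps" using xs unfolding S_def by auto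
  note sc = sums_counts[OF st]
  show "xs \<in> nonneg_paths (2 * int n + int m) (int m)"
    using xs sc pn unfolding S_def nonneg_paths_def ok_def by auto
qed

theorem lemma3p8:
  fixes n m :: nat
  shows "int (card (nonneg_paths (2 * int n + int m) (int m))) =
    (\<Sum>p=0..int n. (ibinom (2 * int n - 2 * p + int m) (int n - p)
                   - ibinom (2 * int n - 2 * p + int m) (int n - p - 1))
                  * ibinom (2 * int n + int m - p) p)"
proof -
  have "card (nonneg_paths (2 * int n + int m) (int m)) = (\<Sum>p\<in>{0..n}. card (S 0 (n-p+m) (n-p) p))"
    unfolding nonneg_eq
    by (rule card_UN_disjoint) (simp_all add: finite_S, auto simp: S_def)
  then have "int (card (nonneg_paths (2 * int n + int m) (int m))) = (\<Sum>p\<in>{0..n}. T 0 (n-p+m) (n-p) p)"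
    by (simp add: card_S)
  also have "\<dots> = (\<Sum>p\<in>{0..n}. (ibinom (2 * int n - 2 * int p + int m) (int n - int p)
                   - ibinom (2 * int n - 2 * int p + int m) (int n - int p - 1))
                  * ibinom (2 * int n + int m - int p) (int p))"
  proof (rule sum.cong[OF refl])
    fix p assume "p \<in> {0..n}"
    then have pn: "p \<le> n" by simp
    have a1: "int (n - p + m) + int (n - p) + int p = 2 * int n + int m - int p" using pn by simp
    have a2: "int (n - p + m) + int (n - p) = 2 * int n - 2 * int p + int m" using pn by simp
    have a3: "int (n - p) = int n - int p" using pn by simp
    show "T 0 (n-p+m) (n-p) p = (ibinom (2 * int n - 2 * int p + int m) (int n - int p)
                   - ibinom (2 * int n - 2 * int p + int m) (int n - int p - 1))
                  * ibinom (2 * int n + int m - int p) (int p)"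
      unfolding T_def B_def a1 unfolding a2 unfolding a3 by (simp only: mult.commute diff_0_right)
  qed
  also have "\<dots> = (\<Sum>p=0..int n. (ibinom (2 * int n - 2 * p + int m) (int n - p)
                   - ibinom (2 * int n - 2 * p + int m) (int n - p - 1))
                  * ibinom (2 * int n + int m - p) p)"
  proof -
    have "{0..int n} = int ` {0..n}" by (simp add: image_int_atLeastAtMost)
    then show ?thesis by (simp add: sum.reindex)
  qed
  finally show ?thesis .
qed

end
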